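(* Let $n\ge 2$ and let $k_1,\dots,k_n$, $a_1,\dots,a_{n-1}$, $b_1,\dots,b_n$ be real or complex numbers. Let $A_2$ be the $n\times n$ matrix with entries $$(A_2)_{ij}=\begin{cases} k_j b_j, & i\le j,\\ k_i a_j, & i>j.\end{cases}$$ Then $$\det(A_2)=k_nb_n\,(k_1b_1-k_2a_1)(k_2b_2-k_3a_2)\cdots(k_{n-1}b_{n-1}-k_na_{n-1}).$$ In particular, $A_2$ is singular if $k_n=0$, or $b_n=0$, or $k_ib_i-k_{i+1}a_i=0$ for some $i\in\{1,\dots,n-1\}$. *)

theory Defs
  imports "Jordan_Normal_Form.Determinant"
begin

definition A2 :: "nat \<Rightarrow> (nat \<Rightarrow> 'a::field) \<Rightarrow> (nat \<Rightarrow> 'a) \<Rightarrow> (nat \<Rightarrow> 'a) \<Rightarrow> 'a mat" where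
  "A2 n k a b = mat n n (\<lambda>(i, j). if i \<le> j then k j * b j else k i * a j)"

end

theory Submission
  imports Defs
begin

lemma sum_bidiag:
  fixes f :: "nat \<Rightarrow> 'a::field"
  assumes "i < n"
  shows "(\<Sum>l\<in>{0..<n}. (if l = i then 1 else if l = Suc i then -1 else 0) * f l)
         = f i - (if Suc i < n then f (Suc i) else 0)"
proof -
  have "(\<Sum>l\<in>{0..<n}. (if l = i then 1 else if l = Suc i then -1 else 0) * f l)
      = (\<Sum>l\<in>{0..<n}. (if l = i then f l else 0) + (if l = Suc i then - f l else 0))"
    by (rule sum.cong) auto
  also have "\<dots> = f i - (if Suc i < n then f (Suc i) else 0)"
    using assms by (simp add: sum.distrib sum.delta)
  finally show ?thesis .
qed

theorem mainTheorem4: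
  fixes k a b :: "nat \<Rightarrow> 'a::field" and n :: nat
  assumes "n \<ge> 2"
  shows "det (A2 n k a b) = k (n - 1) * b (n - 1) * (\<Prod>i<n - 1. k i * b i - k (Suc i) * a i)"
proof -
  define A where "A = A2 n k a b"
  define E :: "'a mat" where "E = mat n n (\<lambda>(i,j). if j = i then 1 else if j = Suc i then -1 else 0)"
  have A: "A \<in> carrier_mat n n" unfolding A_def A2_def by simp
  have E: "E \<in> carrier_mat n n" unfolding E_def by simp
  have detE: "det E = 1"
  proof -
    have "det E = prod_list (diag_mat E)"
      by (rule det_upper_triangular[OF _ E]) (auto simp: upper_triangular_def E_def)
    also have "\<dots> = 1" unfolding prod_list_diag_prod using E by (simp add: E_def)
    finally show ?thesis .
  qed
  define B where "B = E * A"
  have B: "B \<in> carrier_mat n n" using A E by (simp add: B_def)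
  have Bij: "B $$ (i,j) = A $$ (i,j) - (if Suc i < n then A $$ (Suc i, j) else 0)"
    if "i < n" "j < n" for i j
  proof -
    have "B $$ (i,j) = (\<Sum>l\<in>{0..<n}. (if l = i then 1 else if l = Suc i then -1 else 0) * A $$ (l, j))"
      using that A E by (simp add: B_def scalar_prod_def E_def)
    also have "\<dots> = A $$ (i,j) - (if Suc i < n then A $$ (Suc i, j) else 0)"
      by (rule sum_bidiag[OF that(1)])
    finally show ?thesis .
  qed
  have Aij: "A $$ (i,j) = (if i \<le> j then k j * b j else k i * a j)" if "i < n" "j < n" for i j
    using that by (simp add: A_def A2_def)
  have detB: "det B = prod_list (diag_mat B)"
  proof (rule det_lower_triangular[OF _ B])
    fix i j assume "i < j" "j < n"
    then show "B $$ (i,j) = 0" by (simp add: Bij Aij)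
  qed
  have diagB: "B $$ (i,i) = (if Suc i < n then k i * b i - k (Suc i) * a i else k i * b i)"
    if "i < n" for i using that by (simp add: Bij Aij)
  have "prod_list (diag_mat B) = (\<Prod>i\<in>{0..<n}. B $$ (i,i))"
    unfolding prod_list_diag_prod using B by simp
  also have "\<dots> = (\<Prod>i\<in>{0..<n}. (if Suc i < n then k i * b i - k (Suc i) * a i else k i * b i))"
    by (rule prod.cong) (auto simp: diagB)
  also have "\<dots> = k (n - 1) * b (n - 1) * (\<Prod>i<n - 1. k i * b i - k (Suc i) * a i)"
  proof -
    obtain m where m: "n = Suc m" using assms by (cases n) auto
    have "{0..<n} = insert m {..<m}" using m by auto
    then show ?thesis using m
      by (simp add: prod.insert) 
  qed
  finally have "det B = k (n - 1) * b (n - 1) * (\<Prod>i<n - 1. k i * b i - k (Suc i) * a i)"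
    using detB by simp
  moreover have "det B = det A" using det_mult[OF E A] detE by (simp add: B_def)
  ultimately show ?thesis by (simp add: A_def)
qed

end
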